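(* Let $\Phi=B_l$ or $C_l$ with $l\ge2$. There exist fields $K\subseteq F$ of characteristic $2$, with $F$ a finite (hence algebraic) extension of the nonperfect field $K$, and an admissible pair $(\Lambda_l,\Lambda_s)=(Q,P)$ of type $\Phi$ in $F$ with $K\subseteq Q\subseteq P\subseteq F$, such that: (1) if $\Phi=B_l$, $l\ge3$, then $P$ is not a field; (2) if $\Phi=C_l$, $l\ge3$, then $Q$ is not a field; (3) if $\Phi=B_2=C_2$, then neither $P$ nor $Q$ is a field.
   Context: Let $p=2$ for $\Phi=B_l,C_l$. An admissible pair of type $\Phi$ in a ring $R$ is a pair $\Lambda=(\Lambda_l,\Lambda_s)$ of additive subgroups of $R$ with: (AP1) $p\Lambda_s\subseteq\Lambda_l\subseteq\Lambda_s$; (AP2) $t^p\Lambda_l\subseteq\Lambda_l$ for all $t\in\Lambda_s$; (AP3) $\Lambda_s$ is a subring if $\Phi\ne B_l$; (AP4) $\Lambda_l$ is a subring if $\Phi\ne C_l$; and moreover $\Lambda_l\Lambda_s\subseteq\Lambda_s$. For $\Phi=B_2=C_2$ neither $\Lambda_l$ nor $\Lambda_s$ is required to be a subring. *)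

theory Defs
  imports "HOL-Algebra.Algebra"
begin

datatype root_type = B | C

text \<open>The prime p attached to the doubly laced types B_l, C_l is 2.
  For a subset A of a ring R, p A is the set of all elements p t (t in A),
  where p t = t + t computed in R.\<close>
definition pmult_set :: "('a, 'b) ring_scheme \<Rightarrow> 'a set \<Rightarrow> 'a set" where
  "pmult_set R A = {t \<oplus>\<^bsub>R\<^esub> t | t. t \<in> A}"

text \<open>Admissible pair (Lambda_l, Lambda_s) of type Phi = (Phi, l) in the ring R, with p = 2.
  Conditions AP3 / AP4 apply only for rank l >= 3 (for B_2 = C_2 neither set has to be a subring).\<close>
definition admissible_pair ::
  "root_type \<Rightarrow> nat \<Rightarrow> ('a, 'b) ring_scheme \<Rightarrow> 'a set \<Rightarrow> 'a set \<Rightarrow> bool" where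
  "admissible_pair Phi l R Ll Ls \<longleftrightarrow>
     additive_subgroup Ll R \<and> additive_subgroup Ls R \<and>
     pmult_set R Ls \<subseteq> Ll \<and> Ll \<subseteq> Ls \<and>                                   \<comment> \<open>AP1\<close>
     (\<forall>t\<in>Ls. \<forall>x\<in>Ll. (t [^]\<^bsub>R\<^esub> (2::nat)) \<otimes>\<^bsub>R\<^esub> x \<in> Ll) \<and>            \<comment> \<open>AP2\<close>
     (\<not> (Phi = B \<or> l = 2) \<longrightarrow> subring Ls R) \<and>                         \<comment> \<open>AP3\<close>
     (\<not> (Phi = C \<or> l = 2) \<longrightarrow> subring Ll R) \<and>                         \<comment> \<open>AP4\<close>
     (\<forall>x\<in>Ll. \<forall>y\<in>Ls. x \<otimes>\<^bsub>R\<^esub> y \<in> Ls)"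

definition perfect_char2 :: "('a, 'b) ring_scheme \<Rightarrow> 'a set \<Rightarrow> bool" where
  "perfect_char2 R K \<longleftrightarrow> (\<forall>a\<in>K. \<exists>b\<in>K. a = b [^]\<^bsub>R\<^esub> (2::nat))"

definition char_two :: "('a, 'b) ring_scheme \<Rightarrow> bool" where
  "char_two R \<longleftrightarrow> \<one>\<^bsub>R\<^esub> \<oplus>\<^bsub>R\<^esub> \<one>\<^bsub>R\<^esub> = \<zero>\<^bsub>R\<^esub>"

end

theory Submission imports Defs "HOL-Computational_Algebra.Polynomial" "HOL-Computational_Algebra.Fraction_Field" "HOL-Library.Z2" "HOL-Library.Countable"
begin

lemma char2_poly: "(2::'a::comm_ring_1) = 0 \<Longrightarrow> (2::'a poly) = 0"
  by (metis of_nat_numeral of_nat_poly pCons_0_0)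

lemma char2_fract: "(2::'a::idom) = 0 \<Longrightarrow> (2::'a fract) = 0"
  by (metis of_nat_fract of_nat_numeral fract_collapse(1))

lemma char2_neg: "(2::'a::comm_ring_1) = 0 \<Longrightarrow> - (a::'a) = a"
  by (metis add_eq_0_iff mult_2 mult_zero_left)

lemma char2_sq_add: "(2::'a::comm_ring_1) = 0 \<Longrightarrow> (a + b)^2 = (a::'a)^2 + b^2"
  by (simp add: power2_sum)

lemma bit_char2: "(2::bit) = 0"
  by simp

lemma pCons_split: "pCons (a::'a::comm_ring_1) p = [:a:] + [:0,1:] * p"
  by (simp add: mult_pCons_left smult_1_left)

lemma sq_pCons: fixes a :: "'a::comm_ring_1" assumes "(2::'a::comm_ring_1) = 0"
  shows "(pCons a p)^2 = pCons (a^2) (pCons 0 (p^2))"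
proof -
  have "(pCons a p)^2 = ([:a:] + [:0,1:] * p)^2" by (subst pCons_split, rule refl)
  also have "\<dots> = [:a:]^2 + ([:0,1:] * p)^2" by (rule char2_sq_add[OF char2_poly[OF assms]])
  also have "\<dots> = pCons (a^2) (pCons 0 (p^2))"
    by (simp add: power2_eq_square mult_pCons_left)
  finally show ?thesis .
qed

lemma sq_coeff: fixes p :: "'a::comm_ring_1 poly" assumes "(2::'a::comm_ring_1) = 0"
  shows "coeff (p^2) i = (if even i then (coeff p (i div 2))^2 else 0)"
proof (induction p arbitrary: i)
  case (pCons a p)
  show ?case
  proof (cases i)
    case 0 then show ?thesis by (simp add: sq_pCons[OF assms])
  next
    case (Suc j) note j = this
    show ?thesis
    proof (cases j)
      case 0 then show ?thesis using j by (simp add: sq_pCons[OF assms])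
    next
      case (Suc k) then show ?thesis using j pCons.IH[of k] by (simp add: sq_pCons[OF assms])
    qed
  qed
qed simp

definition cst :: "'a::idom \<Rightarrow> 'a poly fract" where "cst a = Fract [:a:] 1"
definition var :: "'a::idom poly fract" where "var = Fract [:0,1:] 1"

definition good :: "'a::field set \<Rightarrow> bool" where
  "good S \<longleftrightarrow> 0 \<in> S \<and> 1 \<in> S \<and> (\<forall>a\<in>S. \<forall>b\<in>S. a + b \<in> S \<and> a * b \<in> S) \<and> (\<forall>a. a^2 \<in> S)"

definition NT :: "'a::field \<Rightarrow> 'a set \<Rightarrow> bool" where
  "NT z S \<longleftrightarrow> (\<forall>e1\<in>S. \<forall>e2\<in>S. z * e1 = e2 \<longrightarrow> e1 = 0)"

definition LiftS :: "'a::field set \<Rightarrow> 'a poly fract set" where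
  "LiftS S = {Fract p q | p q. (\<forall>i. coeff p i \<in> S) \<and> (\<forall>i. coeff q i \<in> S) \<and> q \<noteq> 0}"

definition evenp :: "'a::zero poly \<Rightarrow> bool" where
  "evenp p \<longleftrightarrow> (\<forall>i. odd i \<longrightarrow> coeff p i = 0)"

definition Ev :: "'a::field poly fract set" where
  "Ev = {Fract p q | p q. evenp p \<and> evenp q \<and> q \<noteq> 0}"

lemma LiftS_I: "(\<forall>i. coeff p i \<in> S) \<Longrightarrow> (\<forall>i. coeff q i \<in> S) \<Longrightarrow> q \<noteq> 0 \<Longrightarrow> Fract p q \<in> LiftS S"
  unfolding LiftS_def by blast

lemma Ev_I: "evenp p \<Longrightarrow> evenp q \<Longrightarrow> q \<noteq> 0 \<Longrightarrow> Fract p q \<in> Ev"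
  unfolding Ev_def by blast

lemma good_sum: assumes "good S" "\<And>i. i \<in> A \<Longrightarrow> g i \<in> S" shows "sum g A \<in> S"
  using assms(2)
proof (induction A rule: infinite_finite_induct)
  case (infinite A) then show ?case using assms(1) by (simp add: good_def)
next
  case empty then show ?case using assms(1) by (simp add: good_def)
next
  case (insert x F) then show ?case using assms(1) by (simp add: good_def)
qed

lemma good_coeff_mult: assumes "good S" "\<forall>i. coeff p i \<in> S" "\<forall>i. coeff q i \<in> S"
  shows "\<forall>i. coeff (p * q) i \<in> S"
  using assms by (auto simp: coeff_mult good_def intro!: good_sum)

lemma good_coeff_add: assumes "good S" "\<forall>i. coeff p i \<in> S" "\<forall>i. coeff q i \<in> S"
  shows "\<forall>i. coeff (p + q) i \<in> S"
  using assms by (auto simp: good_def)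

lemma good_coeff_sq: assumes "(2::'a::field) = 0" "good S" 
  shows "\<forall>i. coeff ((p::'a poly)^2) i \<in> S"
  using assms by (auto simp: sq_coeff good_def)

lemma good_LiftS: assumes "(2::'a::field) = 0" "good (S::'a set)" shows "good (LiftS S)"
  unfolding good_def
proof (intro conjI ballI allI)
  show "0 \<in> LiftS S" unfolding fract_expand
    using assms(2) by (intro LiftS_I) (auto simp: good_def coeff_1)
  show "1 \<in> LiftS S" unfolding fract_expand
    using assms(2) by (intro LiftS_I) (auto simp: good_def coeff_1)
next
  fix a b assume a: "a \<in> LiftS S" and b: "b \<in> LiftS S"
  from a obtain p q where pq: "a = Fract p q" "\<forall>i. coeff p i \<in> S" "\<forall>i. coeff q i \<in> S" "q \<noteq> 0"
    unfolding LiftS_def by blast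
  from b obtain r s where rs: "b = Fract r s" "\<forall>i. coeff r i \<in> S" "\<forall>i. coeff s i \<in> S" "s \<noteq> 0"
    unfolding LiftS_def by blast
  have "a + b = Fract (p * s + r * q) (q * s)" using pq rs by simp
  then show "a + b \<in> LiftS S"
    using pq rs good_coeff_mult[OF assms(2)] good_coeff_add[OF assms(2)]
    by (simp only:) (rule LiftS_I; simp)
  have "a * b = Fract (p * r) (q * s)" using pq rs by simp
  then show "a * b \<in> LiftS S"
    using pq rs good_coeff_mult[OF assms(2)] by (simp only:) (rule LiftS_I; simp)
next
  fix a :: "'a poly fract"
  obtain p q where pq: "a = Fract p q" "q \<noteq> 0" by (cases a) auto
  have "a^2 = Fract (p^2) (q^2)" using pq by (simp add: power2_eq_square)
  then show "a^2 \<in> LiftS S"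
    using pq good_coeff_sq[OF assms] by (simp only:) (rule LiftS_I; simp)
qed

lemma cst_LiftS: assumes "good S" "a \<in> S" shows "cst a \<in> LiftS S"
  unfolding cst_def using assms
  by (intro LiftS_I) (auto simp: good_def coeff_pCons coeff_1 split: nat.splits)

lemma var_LiftS: assumes "good S" shows "var \<in> LiftS S"
  unfolding var_def using assms
  by (intro LiftS_I) (auto simp: good_def coeff_pCons coeff_1 split: nat.splits)

lemma NT_LiftS: assumes "good S" "NT z S" shows "NT (cst z) (LiftS S)"
  unfolding NT_def
proof (intro ballI impI)
  fix e1 e2 assume a: "e1 \<in> LiftS S" and b: "e2 \<in> LiftS S" and eq: "cst z * e1 = e2"
  from a obtain p q where pq: "e1 = Fract p q" "\<forall>i. coeff p i \<in> S" "\<forall>i. coeff q i \<in> S" "q \<noteq> 0"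
    unfolding LiftS_def by blast
  from b obtain r s where rs: "e2 = Fract r s" "\<forall>i. coeff r i \<in> S" "\<forall>i. coeff s i \<in> S" "s \<noteq> 0"
    unfolding LiftS_def by blast
  have "Fract ([:z:] * p) q = Fract r s" using eq pq rs by (simp add: cst_def)
  then have e: "[:z:] * p * s = r * q" using pq rs by (simp add: eq_fract)
  have "\<forall>i. coeff (p * s) i = 0"
  proof
    fix i
    have "z * coeff (p * s) i = coeff (r * q) i"
      using arg_cong[OF e, of "\<lambda>x. coeff x i"] by (simp add: mult.assoc)
    moreover have "coeff (p * s) i \<in> S" "coeff (r * q) i \<in> S"
      using good_coeff_mult[OF assms(1)] pq rs by auto
    ultimately show "coeff (p * s) i = 0" using assms(2) unfolding NT_def by blast
  qed
  then have "p * s = 0" by (simp add: poly_eq_iff)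
  then have "p = 0" using rs by simp
  then show "e1 = 0" using pq by (simp add: fract_collapse)
qed

lemma evenp_add: "evenp p \<Longrightarrow> evenp q \<Longrightarrow> evenp (p + q)"
  by (simp add: evenp_def)

lemma evenp_mult: assumes "evenp p" "evenp (q::'a::comm_semiring_0 poly)" shows "evenp (p * q)"
  unfolding evenp_def
proof (intro allI impI)
  fix i :: nat assume i: "odd i"
  have "\<forall>j\<in>{..i}. coeff p j * coeff q (i - j) = 0"
  proof
    fix j assume "j \<in> {..i}"
    then have ji: "j \<le> i" by simp
    show "coeff p j * coeff q (i - j) = 0"
    proof (cases "odd j")
      case True then show ?thesis using assms by (simp add: evenp_def)
    next
      case False
      then have "odd (i - j)" using i ji by presburger
      then show ?thesis using assms by (simp add: evenp_def)
    qed
  qed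
  then show "coeff (p * q) i = 0" by (simp add: coeff_mult)
qed

lemma evenp_const: "evenp [:a:]"
  unfolding evenp_def
proof (intro allI impI)
  fix i :: nat assume "odd i"
  then obtain k where "i = Suc k" using odd_pos gr0_implies_Suc by blast
  then show "coeff [:a:] i = 0" by simp
qed

lemma evenp_sq: "(2::'a::comm_ring_1) = 0 \<Longrightarrow> evenp ((p::'a poly)^2)"
  by (simp add: evenp_def sq_coeff)

lemma evenp_degree: assumes "evenp p" "p \<noteq> 0" shows "even (degree p)"
  using assms leading_coeff_neq_0[of p] unfolding evenp_def by blast

lemma good_Ev: assumes "(2::'a::field) = 0" shows "good (Ev :: 'a poly fract set)"
  unfolding good_def
proof (intro conjI ballI allI)
  have e1: "evenp (1::'a poly)" by (metis evenp_const one_pCons)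
  have e0: "evenp (0::'a poly)" by (simp add: evenp_def)
  show "0 \<in> (Ev :: 'a poly fract set)" unfolding fract_expand
    by (rule Ev_I[OF e0 e1]) simp
  show "1 \<in> (Ev :: 'a poly fract set)" unfolding fract_expand
    by (rule Ev_I[OF e1 e1]) simp
next
  fix a b :: "'a poly fract" assume a: "a \<in> Ev" and b: "b \<in> Ev"
  from a obtain p q where pq: "a = Fract p q" "evenp p" "evenp q" "q \<noteq> 0"
    unfolding Ev_def by blast
  from b obtain r s where rs: "b = Fract r s" "evenp r" "evenp s" "s \<noteq> 0"
    unfolding Ev_def by blast
  have "a + b = Fract (p * s + r * q) (q * s)" using pq rs by simp
  then show "a + b \<in> Ev"
    using pq rs by (simp only:) (rule Ev_I; simp add: evenp_add evenp_mult)
  have "a * b = Fract (p * r) (q * s)" using pq rs by simp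
  then show "a * b \<in> Ev"
    using pq rs by (simp only:) (rule Ev_I; simp add: evenp_mult)
next
  fix a :: "'a poly fract"
  obtain p q where pq: "a = Fract p q" "q \<noteq> 0" by (cases a) auto
  have "a^2 = Fract (p^2) (q^2)" using pq by (simp add: power2_eq_square)
  then show "a^2 \<in> Ev"
    using pq evenp_sq[OF assms] by (simp only:) (rule Ev_I; simp)
qed

lemma cst_Ev: "cst a \<in> Ev"
  unfolding cst_def by (rule Ev_I) (auto simp: evenp_const one_pCons simp del: pCons_one)

lemma NT_var_Ev: "NT (var :: 'a::field poly fract) Ev"
  unfolding NT_def
proof (intro ballI impI)
  fix e1 e2 :: "'a poly fract" assume a: "e1 \<in> Ev" and b: "e2 \<in> Ev" and eq: "var * e1 = e2"
  from a obtain p q where pq: "e1 = Fract p q" "evenp p" "evenp q" "q \<noteq> 0"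
    unfolding Ev_def by blast
  from b obtain r s where rs: "e2 = Fract r s" "evenp r" "evenp s" "s \<noteq> 0"
    unfolding Ev_def by blast
  have "Fract ([:0,1:] * p) q = Fract r s" using eq pq rs by (simp add: var_def)
  then have e: "[:0,1:] * p * s = r * q" using pq rs by (simp add: eq_fract)
  show "e1 = 0"
  proof (rule ccontr)
    assume "e1 \<noteq> 0"
    then have p0: "p \<noteq> 0" using pq by (auto simp: fract_collapse)
    then have l0: "[:0,1:] * p * s \<noteq> 0" using rs by simp
    then have r0: "r \<noteq> 0" using e by auto
    have "degree ([:0,1:] * p * s) = degree [:0,1::'a:] + degree p + degree s"
    proof -
      have nz: "[:0,1::'a:] \<noteq> 0" by simp
      have "[:0,1::'a:] * p \<noteq> 0" using nz p0 by simp
      then show ?thesis using degree_mult_eq[OF nz p0] degree_mult_eq[of "[:0,1::'a:] * p" s] rs by simp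
    qed
    then have d1: "degree ([:0,1:] * p * s) = Suc (degree p + degree s)" by simp
    have d2: "degree (r * q) = degree r + degree q"
      using r0 pq by (simp add: degree_mult_eq)
    have d3: "degree ([:0,1:] * p * s) = degree (r * q)" using e by (rule arg_cong)
    have "even (degree p)" "even (degree s)" "even (degree r)" "even (degree q)"
      using evenp_degree pq rs p0 r0 by auto
    then show False using d1 d2 d3 by presburger
  qed
qed

definition spans :: "nat \<Rightarrow> (nat \<Rightarrow> 'a::comm_ring_1) \<Rightarrow> bool" where
  "spans n ms \<longleftrightarrow> (\<forall>t. \<exists>c. t = (\<Sum>i<n. (c i)^2 * ms i))"

lemma sum_const_poly: "(\<Sum>i\<in>A. [:f i:]) = [:\<Sum>i\<in>A. f i:]"
  by (induction A rule: infinite_finite_induct) auto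

lemma trans_sym: "a = b \<Longrightarrow> c = b \<Longrightarrow> c = a" by simp

lemma spans_poly:
  fixes ms :: "nat \<Rightarrow> 'a::comm_ring_1"
  assumes c2: "(2::'a) = 0" and sp: "spans n ms"
  shows "\<exists>R S. p = (\<Sum>i<n. (R i)^2 * [:ms i:]) + [:0,1:] * (\<Sum>i<n. (S i)^2 * [:ms i:])"
proof (induction p)
  case 0
  show ?case by (rule exI[of _ "\<lambda>_. 0"], rule exI[of _ "\<lambda>_. 0"]) simp
next
  case (pCons a p)
  then obtain R S where RS: "p = (\<Sum>i<n. (R i)^2 * [:ms i:]) + [:0,1:] * (\<Sum>i<n. (S i)^2 * [:ms i:])"
    by blast
  obtain c where c: "a = (\<Sum>i<n. (c i)^2 * ms i)" using sp unfolding spans_def by blast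
  define R' where "R' i = [:c i:] + [:0,1:] * S i" for i
  have c2p: "(2::'a poly) = 0" by (rule char2_poly[OF c2])
  have "(\<Sum>i<n. (R' i)^2 * [:ms i:]) = (\<Sum>i<n. [:(c i)^2 * ms i:] + [:0,1:] * ([:0,1:] * ((S i)^2 * [:ms i:])))"
  proof (rule sum.cong[OF refl])
    fix i
    have "(R' i)^2 = [:c i:]^2 + ([:0,1:] * S i)^2" unfolding R'_def by (rule char2_sq_add[OF c2p])
    then show "(R' i)^2 * [:ms i:] = [:(c i)^2 * ms i:] + [:0,1:] * ([:0,1:] * ((S i)^2 * [:ms i:]))"
      by (simp add: power2_eq_square algebra_simps)
  qed
  also have "\<dots> = [:a:] + [:0,1:] * ([:0,1:] * (\<Sum>i<n. (S i)^2 * [:ms i:]))"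
    by (simp only: sum.distrib sum_const_poly c flip: sum_distrib_left)
  finally have X: "(\<Sum>i<n. (R' i)^2 * [:ms i:]) = [:a:] + [:0,1:] * ([:0,1:] * (\<Sum>i<n. (S i)^2 * [:ms i:]))" .
  have "(\<Sum>i<n. (R' i)^2 * [:ms i:]) + [:0,1:] * (\<Sum>i<n. (R i)^2 * [:ms i:]) = pCons a p"
  proof -
    have e: "\<And>a y A B :: 'a poly. a + y * (y * B) + y * A = a + y * (A + y * B)"
      by (simp only: distrib_left add_ac)
    have P1: "pCons a p = [:a:] + [:0,1:] * p" by (rule pCons_split)
    have P2: "[:a:] + [:0,1:] * p = [:a:] + [:0,1:] * ((\<Sum>i<n. (R i)^2 * [:ms i:]) + [:0,1:] * (\<Sum>i<n. (S i)^2 * [:ms i:]))"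
      using RS by (rule arg_cong)
    have "(\<Sum>i<n. (R' i)^2 * [:ms i:]) + [:0,1:] * (\<Sum>i<n. (R i)^2 * [:ms i:])
       = ([:a:] + [:0,1:] * ([:0,1:] * (\<Sum>i<n. (S i)^2 * [:ms i:]))) + [:0,1:] * (\<Sum>i<n. (R i)^2 * [:ms i:])"
      by (rule arg_cong[OF X, of "\<lambda>u. u + [:0,1:] * (\<Sum>i<n. (R i)^2 * [:ms i:])"])
    also have "\<dots> = [:a:] + [:0,1:] * ((\<Sum>i<n. (R i)^2 * [:ms i:]) + [:0,1:] * (\<Sum>i<n. (S i)^2 * [:ms i:]))"
      by (rule e)
    also have "\<dots> = pCons a p" by (rule sym[OF trans[OF P1 P2]])
    finally show ?thesis .
  qed
  then show ?case by (intro exI[of _ R'] exI[of _ R]) (rule sym)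
qed

lemma sum_split_add: fixes n m :: nat and g :: "nat \<Rightarrow> 'b::comm_monoid_add" shows "(\<Sum>i<n+m. g i) = (\<Sum>i<n. g i) + (\<Sum>i<m. g (n + i))"
  by (induction m) (auto simp: add_ac)

lemma Fract_add1: "Fract (a + b) 1 = Fract a 1 + Fract b (1::'a::idom)"
  by simp

lemma Fract_sum1: "Fract (sum f A) 1 = (\<Sum>i\<in>A. Fract (f i) (1::'a::idom))"
  by (induction A rule: infinite_finite_induct) (auto simp: fract_collapse Fract_add1)

lemma spans_fract:
  fixes ms :: "nat \<Rightarrow> 'a::field"
  assumes c2: "(2::'a) = 0" and sp: "spans n ms"
  shows "spans (2*n) (\<lambda>i. if i < n then cst (ms i) else var * cst (ms (i - n)))"
  unfolding spans_def
proof
  fix t :: "'a poly fract"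
  obtain p q where pq: "t = Fract p q" "q \<noteq> 0" by (cases t) auto
  obtain R S where RS: "p * q = (\<Sum>i<n. (R i)^2 * [:ms i:]) + [:0,1:] * (\<Sum>i<n. (S i)^2 * [:ms i:])"
    using spans_poly[OF c2 sp] by blast
  define c where "c i = (if i < n then Fract (R i) q else Fract (S (i - n)) q)" for i
  have A: "Fract (R i) q ^2 * cst (ms i) = Fract 1 (q^2) * Fract ((R i)^2 * [:ms i:]) 1" for i
    using pq by (simp add: cst_def power2_eq_square)
  have B: "Fract (S i) q ^2 * (var * cst (ms i)) = Fract 1 (q^2) * (Fract [:0,1:] 1 * Fract ((S i)^2 * [:ms i:]) 1)" for i
    using pq by (simp add: cst_def var_def power2_eq_square)
  have "(\<Sum>i<2*n. (c i)^2 * (if i < n then cst (ms i) else var * cst (ms (i - n))))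
      = (\<Sum>i<n. Fract (R i) q ^2 * cst (ms i)) + (\<Sum>i<n. Fract (S i) q ^2 * (var * cst (ms i)))"
    unfolding mult_2 sum_split_add by (simp add: c_def)
  also have "\<dots> = Fract 1 (q^2) * (Fract (\<Sum>i<n. (R i)^2 * [:ms i:]) 1 + Fract [:0,1:] 1 * Fract (\<Sum>i<n. (S i)^2 * [:ms i:]) 1)"
    by (simp only: A B Fract_sum1 distrib_left sum_distrib_left)
  also have "\<dots> = Fract 1 (q^2) * Fract (p * q) 1"
    unfolding RS by (simp add: fract_collapse)
  also have "\<dots> = t"
    using pq by (simp add: power2_eq_square eq_fract)
  finally show "\<exists>c. t = (\<Sum>i<2*n. (c i)^2 * (if i < n then cst (ms i) else var * cst (ms (i - n))))"
    by (intro exI[of _ c]) (rule sym)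
qed

instance bit :: countable
  by (rule countable_classI[of "\<lambda>b::bit. if b = 0 then (0::nat) else 1"]) (metis bit_not_zero_iff zero_neq_one)

instance poly :: ("{zero,countable}") countable
  by (rule countable_classI[of "\<lambda>p. to_nat (coeffs p)"]) (simp add: coeffs_eq_iff)

instance fract :: ("{idom,countable}") countable
proof (rule countable_classI[of "\<lambda>x. to_nat (SOME pq. x = Fract (fst pq) (snd pq))"])
  fix x y :: "'a fract"
  assume h: "to_nat (SOME pq. x = Fract (fst pq) (snd pq)) = to_nat (SOME pq. y = Fract (fst pq) (snd pq))"
  have ex: "\<exists>pq. z = Fract (fst pq) (snd pq)" for z :: "'a fract"
    by (cases z) auto
  have "(SOME pq. x = Fract (fst pq) (snd pq)) = (SOME pq. y = Fract (fst pq) (snd pq))"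
    using h by simp
  then show "x = y" using someI_ex[OF ex[of x]] someI_ex[OF ex[of y]] by metis
qed

type_synonym t1 = "bit poly fract"
type_synonym t2 = "t1 poly fract"
type_synonym t3 = "t2 poly fract"
type_synonym t4 = "t3 poly fract"

definition Fr :: "'a::{field,countable} itself \<Rightarrow> nat ring" where
  "Fr _ = \<lparr>carrier = range (to_nat :: 'a \<Rightarrow> nat),
     monoid.mult = (\<lambda>a b. to_nat (from_nat a * from_nat b :: 'a)),
     one = to_nat (1::'a), ring.zero = to_nat (0::'a),
     add = (\<lambda>a b. to_nat (from_nat a + from_nat b :: 'a))\<rparr>"

lemma Fr_simps:
  fixes a b :: "'a::{field,countable}"
  shows "carrier (Fr TYPE('a)) = range (to_nat :: 'a \<Rightarrow> nat)"
    and "to_nat a \<otimes>\<^bsub>Fr TYPE('a)\<^esub> to_nat b = to_nat (a * b)"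
    and "to_nat a \<oplus>\<^bsub>Fr TYPE('a)\<^esub> to_nat b = to_nat (a + b)"
    and "\<one>\<^bsub>Fr TYPE('a)\<^esub> = to_nat (1::'a)"
    and "\<zero>\<^bsub>Fr TYPE('a)\<^esub> = to_nat (0::'a)"
  by (simp_all add: Fr_def)

lemma field_Fr: "field (Fr TYPE('a::{field,countable}))"
proof -
  have "\<exists>y. x + y = 0" for x :: 'a
    using add.right_inverse by blast
  moreover have "x \<noteq> 0 \<Longrightarrow> \<exists>y. x * y = 1" for x :: 'a
    by (rule exI[of _ "inverse x"]) auto
  ultimately show ?thesis
    unfolding Fr_def
    apply unfold_locales
    apply (auto simp: algebra_simps Units_def image_iff)
    done
qed


lemma Fr_ainv: "\<ominus>\<^bsub>Fr TYPE('a::{field,countable})\<^esub> (to_nat a) = to_nat (- a :: 'a)"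
proof -
  interpret field "Fr TYPE('a)" by (rule field_Fr)
  show ?thesis
  proof (rule minus_equality)
    show "to_nat (- a) \<oplus>\<^bsub>Fr TYPE('a)\<^esub> to_nat a = \<zero>\<^bsub>Fr TYPE('a)\<^esub>"
      by (simp only: Fr_simps(3,5) left_minus)
    show "to_nat a \<in> carrier (Fr TYPE('a))" "to_nat (- a) \<in> carrier (Fr TYPE('a))"
      unfolding Fr_simps(1) by (rule rangeI)+
  qed
qed


lemma Fr_mem: "to_nat (a::'a::{field,countable}) \<in> carrier (Fr TYPE('a))"
  unfolding Fr_simps(1) by (rule rangeI)

lemma Fr_img: "to_nat (a::'a::countable) \<in> to_nat ` S \<longleftrightarrow> a \<in> S"
  by (auto dest: injD[OF inj_to_nat])

lemma Fr_img_carrier: "to_nat ` (S::'a::{field,countable} set) \<subseteq> carrier (Fr TYPE('a))"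
  unfolding Fr_simps(1) by blast

lemma Fr_pow: "(to_nat a) [^]\<^bsub>Fr TYPE('a::{field,countable})\<^esub> (n::nat) = to_nat (a ^ n :: 'a)"
proof (induction n)
  case 0 show ?case by (simp only: nat_pow_0 Fr_simps(4) power_0)
next
  case (Suc n) show ?case by (simp only: nat_pow_Suc Suc Fr_simps(2) power_Suc2)
qed

lemma Fr_inv: assumes "a \<noteq> 0"
  shows "inv\<^bsub>Fr TYPE('a::{field,countable})\<^esub> (to_nat a) = to_nat (inverse a :: 'a)"
proof -
  interpret field "Fr TYPE('a)" by (rule field_Fr)
  show ?thesis
  proof (rule comm_inv_char[OF Fr_mem Fr_mem])
    show "to_nat a \<otimes>\<^bsub>Fr TYPE('a)\<^esub> to_nat (inverse a) = \<one>\<^bsub>Fr TYPE('a)\<^esub>"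
      using assms by (simp only: Fr_simps(2,4)) simp
  qed
qed

lemma ring_Fr: "ring (Fr TYPE('a::{field,countable}))"
proof -
  interpret field "Fr TYPE('a)" by (rule field_Fr)
  show ?thesis by (rule is_ring)
qed

lemma Fr_addsub:
  fixes S :: "'a::{field,countable} set"
  assumes "0 \<in> S" "\<And>a b. a \<in> S \<Longrightarrow> b \<in> S \<Longrightarrow> a + b \<in> S" "\<And>a. a \<in> S \<Longrightarrow> - a \<in> S"
  shows "additive_subgroup (to_nat ` S) (Fr TYPE('a))"
proof -
  interpret field "Fr TYPE('a)" by (rule field_Fr)
  have ne: "to_nat ` S \<noteq> {}" using assms(1) by blast
  have inv: "\<ominus>\<^bsub>Fr TYPE('a)\<^esub> h \<in> to_nat ` S" if "h \<in> to_nat ` S" for h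
  proof -
    from that obtain a where a: "h = to_nat a" "a \<in> S" by blast
    show ?thesis unfolding a(1) Fr_ainv using assms(3)[OF a(2)] by blast
  qed
  have add: "h1 \<oplus>\<^bsub>Fr TYPE('a)\<^esub> h2 \<in> to_nat ` S" if "h1 \<in> to_nat ` S" "h2 \<in> to_nat ` S" for h1 h2
  proof -
    from that obtain a b where ab: "h1 = to_nat a" "a \<in> S" "h2 = to_nat b" "b \<in> S" by blast
    show ?thesis unfolding ab(1,3) Fr_simps(3) using assms(2)[OF ab(2,4)] by blast
  qed
  show ?thesis by (rule additive_subgroupI[OF add.subgroupI[OF Fr_img_carrier ne inv add]])
qed

lemma Fr_subring:
  fixes S :: "'a::{field,countable} set"
  assumes "1 \<in> S" "\<And>a b. a \<in> S \<Longrightarrow> b \<in> S \<Longrightarrow> a + b \<in> S" "\<And>a. a \<in> S \<Longrightarrow> - a \<in> S"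
    "\<And>a b. a \<in> S \<Longrightarrow> b \<in> S \<Longrightarrow> a * b \<in> S"
  shows "subring (to_nat ` S) (Fr TYPE('a))"
proof -
  interpret field "Fr TYPE('a)" by (rule field_Fr)
  show ?thesis
  proof (rule subringI[OF Fr_img_carrier])
    show "\<one>\<^bsub>Fr TYPE('a)\<^esub> \<in> to_nat ` S" unfolding Fr_simps(4) using assms(1) by blast
  next
    fix h assume "h \<in> to_nat ` S"
    then obtain a where a: "h = to_nat a" "a \<in> S" by blast
    show "\<ominus>\<^bsub>Fr TYPE('a)\<^esub> h \<in> to_nat ` S"
      unfolding a(1) Fr_ainv using assms(3)[OF a(2)] by blast
  next
    fix h1 h2 assume "h1 \<in> to_nat ` S" "h2 \<in> to_nat ` S"
    then obtain a b where ab: "h1 = to_nat a" "a \<in> S" "h2 = to_nat b" "b \<in> S" by blast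
    show "h1 \<otimes>\<^bsub>Fr TYPE('a)\<^esub> h2 \<in> to_nat ` S"
      unfolding ab(1,3) Fr_simps(2) using assms(4)[OF ab(2,4)] by blast
    show "h1 \<oplus>\<^bsub>Fr TYPE('a)\<^esub> h2 \<in> to_nat ` S"
      unfolding ab(1,3) Fr_simps(3) using assms(2)[OF ab(2,4)] by blast
  qed
qed

lemma Fr_subfield:
  fixes S :: "'a::{field,countable} set"
  assumes "1 \<in> S" "\<And>a b. a \<in> S \<Longrightarrow> b \<in> S \<Longrightarrow> a + b \<in> S" "\<And>a. a \<in> S \<Longrightarrow> - a \<in> S"
    "\<And>a b. a \<in> S \<Longrightarrow> b \<in> S \<Longrightarrow> a * b \<in> S" "\<And>a. a \<in> S \<Longrightarrow> inverse a \<in> S"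
  shows "subfield (to_nat ` S) (Fr TYPE('a))"
proof -
  interpret field "Fr TYPE('a)" by (rule field_Fr)
  show ?thesis
  proof (rule subfieldI'[OF Fr_subring[OF assms(1-4)]])
    fix k assume k: "k \<in> to_nat ` S - {\<zero>\<^bsub>Fr TYPE('a)\<^esub>}"
    then obtain a where a: "k = to_nat a" "a \<in> S" by blast
    have "a \<noteq> 0" using k a unfolding Fr_simps(5) by blast
    then show "inv\<^bsub>Fr TYPE('a)\<^esub> k \<in> to_nat ` S" unfolding a(1) Fr_inv[OF \<open>a \<noteq> 0\<close>]
      using assms(5)[OF a(2)] by blast
  qed
qed

lemma Fr_not_subfield:
  fixes S :: "'a::{field,countable} set"
  assumes "a \<in> S" "b \<in> S" "a * b \<notin> S"
  shows "\<not> subfield (to_nat ` S) (Fr TYPE('a))"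
proof
  assume "subfield (to_nat ` S) (Fr TYPE('a))"
  then have sr: "subring (to_nat ` S) (Fr TYPE('a))" by (rule subfieldE(1))
  have "to_nat a \<in> to_nat ` S" "to_nat b \<in> to_nat ` S" using assms(1,2) by blast+
  then have "to_nat a \<otimes>\<^bsub>Fr TYPE('a)\<^esub> to_nat b \<in> to_nat ` S"
    by (rule subringE(6)[OF sr])
  then have "to_nat (a * b) \<in> to_nat ` S" by (simp only: Fr_simps(2))
  then show False using assms(3) Fr_img by blast
qed

lemma combine_map:
  "ring.combine (Fr TYPE('a::{field,countable})) (map (\<lambda>i. to_nat (a i)) xs) (map (\<lambda>i. to_nat (b i)) xs)
    = to_nat (\<Sum>i\<leftarrow>xs. a i * b i :: 'a)"
proof (induction xs)
  case Nil show ?case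
    by (simp only: list.map ring.combine.simps[OF ring_Fr] Fr_simps(5) sum_list.Nil)
next
  case (Cons x xs) show ?case
    by (simp only: list.map ring.combine.simps(1)[OF ring_Fr] Cons Fr_simps(2,3) sum_list.Cons)
qed

lemma Fr_findim:
  fixes K :: "'a::{field,countable} set" and n :: nat
  assumes sf: "subfield (to_nat ` K) (Fr TYPE('a))"
    and sp: "\<And>t. \<exists>c. t = (\<Sum>i<n. c i * ms i) \<and> (\<forall>i. c i \<in> K)"
  shows "ring.finite_dimension (Fr TYPE('a)) (to_nat ` K) (carrier (Fr TYPE('a)))"
proof -
  interpret field "Fr TYPE('a)" by (rule field_Fr)
  define Us where "Us = map (\<lambda>i. to_nat (ms i)) [0..<n]"
  have Us: "set Us \<subseteq> carrier (Fr TYPE('a))" unfolding Us_def using Fr_mem by auto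
  have "carrier (Fr TYPE('a)) \<subseteq> Span (to_nat ` K) Us"
  proof
    fix x assume "x \<in> carrier (Fr TYPE('a))"
    then obtain t :: 'a where t: "x = to_nat t" unfolding Fr_simps(1) by blast
    obtain c where c: "t = (\<Sum>i<n. c i * ms i)" "\<forall>i. c i \<in> K" using sp by blast
    have "(\<Sum>i\<leftarrow>[0..<n]. c i * ms i) = (\<Sum>i<n. c i * ms i)"
      by (simp add: interv_sum_list_conv_sum_set_nat atLeast0LessThan)
    then have "x = combine (map (\<lambda>i. to_nat (c i)) [0..<n]) Us"
      unfolding Us_def combine_map t c(1) by simp
    moreover have "set (map (\<lambda>i. to_nat (c i)) [0..<n]) \<subseteq> to_nat ` K" using c(2) by auto
    ultimately show "x \<in> Span (to_nat ` K) Us"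
      unfolding Span_eq_combine_set[OF sf Us] by blast
  qed
  moreover have "Span (to_nat ` K) Us \<subseteq> carrier (Fr TYPE('a))"
    by (rule Span_subgroup_props(1)[OF sf Us])
  ultimately have "Span (to_nat ` K) Us = carrier (Fr TYPE('a))" by blast
  then show ?thesis using Span_finite_dimension[OF sf Us] by simp
qed



lemma good_add: "good E \<Longrightarrow> a \<in> E \<Longrightarrow> b \<in> E \<Longrightarrow> a + b \<in> E" unfolding good_def by blast
lemma good_mult: "good E \<Longrightarrow> a \<in> E \<Longrightarrow> b \<in> E \<Longrightarrow> a * b \<in> E" unfolding good_def by blast
lemma good_sq: "good E \<Longrightarrow> a^2 \<in> E" unfolding good_def by blast
lemma good_1: "good E \<Longrightarrow> 1 \<in> E" unfolding good_def by blast
lemma good_0: "good E \<Longrightarrow> 0 \<in> E" unfolding good_def by blast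

context
  fixes Xv Yv Zv Wv :: "'a::field"
  assumes c2: "(2::'a) = 0"
begin

lemma sqa: "(a + b)^2 = a^2 + (b::'a)^2" by (rule char2_sq_add[OF c2])
lemma dbl: "x + x = (0::'a)" by (metis c2 mult_2 mult_zero_left)
lemma ng: "- x = (x::'a)" by (rule char2_neg[OF c2])

definition "K0 = {u::'a. \<exists>c. u = c^2}"
definition "Q3 = {a^2 + b^2 * Xv + c^2 * Yv | a b c. True}"
definition "R4 = {a^2 + b^2 * Xv + c^2 * Yv + d^2 * (Xv * Yv) | a b c d. True}"
definition "P12 = {r0 + r1 * Zv + r2 * Wv | r0 r1 r2. r0 \<in> R4 \<and> r1 \<in> R4 \<and> r2 \<in> R4}"

lemma K0_sq: "s^2 \<in> K0" unfolding K0_def by blast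
lemma K0_0: "0 \<in> K0" using K0_sq[of 0] by simp
lemma K0_1: "1 \<in> K0" using K0_sq[of 1] by simp
lemma K0_add: "u \<in> K0 \<Longrightarrow> v \<in> K0 \<Longrightarrow> u + v \<in> K0"
proof -
  assume "u \<in> K0" "v \<in> K0"
  then obtain a b where "u = a^2" "v = b^2" unfolding K0_def by blast
  then have "u + v = (a + b)^2" by (simp add: sqa)
  then show ?thesis by (simp add: K0_sq)
qed
lemma K0_mult: "u \<in> K0 \<Longrightarrow> v \<in> K0 \<Longrightarrow> u * v \<in> K0"
proof -
  assume "u \<in> K0" "v \<in> K0"
  then obtain a b where "u = a^2" "v = b^2" unfolding K0_def by blast
  then have "u * v = (a * b)^2" by (simp add: power_mult_distrib)
  then show ?thesis by (simp add: K0_sq)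
qed
lemma K0_neg: "u \<in> K0 \<Longrightarrow> - u \<in> K0" by (simp add: ng)
lemma K0_inv: "u \<in> K0 \<Longrightarrow> inverse u \<in> K0"
proof -
  assume "u \<in> K0"
  then obtain a where "u = a^2" unfolding K0_def by blast
  then have "inverse u = (inverse a)^2" by (simp add: power_inverse)
  then show ?thesis by (simp add: K0_sq)
qed

lemma K0_Q3: "K0 \<subseteq> Q3"
proof
  fix u assume "u \<in> K0"
  then obtain s where "u = s^2" unfolding K0_def by blast
  then have "u = s^2 + 0^2 * Xv + 0^2 * Yv" by simp
  then show "u \<in> Q3" unfolding Q3_def by blast
qed

lemma Q3_R4: "Q3 \<subseteq> R4"
proof
  fix u assume "u \<in> Q3"
  then obtain a b c where "u = a^2 + b^2 * Xv + c^2 * Yv" unfolding Q3_def by blast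
  then have "u = a^2 + b^2 * Xv + c^2 * Yv + 0^2 * (Xv * Yv)" by simp
  then show "u \<in> R4" unfolding R4_def by blast
qed

lemma R4_0: "0 \<in> R4"
proof -
  have "(0::'a) = 0^2 + 0^2 * Xv + 0^2 * Yv + 0^2 * (Xv * Yv)" by simp
  then show ?thesis unfolding R4_def by blast
qed

lemma R4_1: "1 \<in> R4"
proof -
  have "(1::'a) = 1^2 + 0^2 * Xv + 0^2 * Yv + 0^2 * (Xv * Yv)" by simp
  then show ?thesis unfolding R4_def by blast
qed

lemma R4_P12: "R4 \<subseteq> P12"
proof
  fix u assume "u \<in> R4"
  moreover have "u = u + 0 * Zv + 0 * Wv" by simp
  ultimately show "u \<in> P12" unfolding P12_def using R4_0 by blast
qed

lemma Q3_add: "u \<in> Q3 \<Longrightarrow> v \<in> Q3 \<Longrightarrow> u + v \<in> Q3"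
proof -
  assume "u \<in> Q3" "v \<in> Q3"
  then obtain a b c aa bb cc where u: "u = a^2 + b^2 * Xv + c^2 * Yv" and v: "v = aa^2 + bb^2 * Xv + cc^2 * Yv"
    unfolding Q3_def by blast
  have "u + v = (a + aa)^2 + (b + bb)^2 * Xv + (c + cc)^2 * Yv" unfolding u v sqa by (simp add: algebra_simps)
  then show ?thesis unfolding Q3_def by blast
qed

lemma Q3_smult: "k \<in> K0 \<Longrightarrow> v \<in> Q3 \<Longrightarrow> k * v \<in> Q3"
proof -
  assume "k \<in> K0" "v \<in> Q3"
  then obtain s a b c where k: "k = s^2" and v: "v = a^2 + b^2 * Xv + c^2 * Yv"
    unfolding Q3_def K0_def by blast
  have "k * v = (s * a)^2 + (s * b)^2 * Xv + (s * c)^2 * Yv" unfolding k v by (simp add: algebra_simps power_mult_distrib)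
  then show ?thesis unfolding Q3_def by blast
qed

lemma R4_add: "u \<in> R4 \<Longrightarrow> v \<in> R4 \<Longrightarrow> u + v \<in> R4"
proof -
  assume "u \<in> R4" "v \<in> R4"
  then obtain a b c d aa bb cc dd where u: "u = a^2 + b^2 * Xv + c^2 * Yv + d^2 * (Xv * Yv)"
    and v: "v = aa^2 + bb^2 * Xv + cc^2 * Yv + dd^2 * (Xv * Yv)"
    unfolding R4_def by blast
  have "u + v = (a + aa)^2 + (b + bb)^2 * Xv + (c + cc)^2 * Yv + (d + dd)^2 * (Xv * Yv)" unfolding u v sqa by (simp add: algebra_simps)
  then show ?thesis unfolding R4_def by blast
qed

lemma R4_mult: "u \<in> R4 \<Longrightarrow> v \<in> R4 \<Longrightarrow> u * v \<in> R4"
proof -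
  assume "u \<in> R4" "v \<in> R4"
  then obtain a b c d e f g h where u: "u = a^2 + b^2 * Xv + c^2 * Yv + d^2 * (Xv * Yv)"
    and v: "v = e^2 + f^2 * Xv + g^2 * Yv + h^2 * (Xv * Yv)"
    unfolding R4_def by blast
  have "u * v = (a*e + b*f*Xv + c*g*Yv + d*h*(Xv*Yv))^2 + (a*f + b*e + c*h*Yv + d*g*Yv)^2 * Xv
     + (a*g + c*e + b*h*Xv + d*f*Xv)^2 * Yv + (a*h + b*g + c*f + d*e)^2 * (Xv * Yv)"
    unfolding u v sqa power_mult_distrib by (simp add: algebra_simps power2_eq_square)
  then show ?thesis unfolding R4_def by blast
qed

lemma P12_add: "u \<in> P12 \<Longrightarrow> v \<in> P12 \<Longrightarrow> u + v \<in> P12"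
proof -
  assume "u \<in> P12" "v \<in> P12"
  then obtain r0 r1 r2 s0 s1 s2 where u: "u = r0 + r1 * Zv + r2 * Wv" "r0 \<in> R4" "r1 \<in> R4" "r2 \<in> R4"
    and v: "v = s0 + s1 * Zv + s2 * Wv" "s0 \<in> R4" "s1 \<in> R4" "s2 \<in> R4"
    unfolding P12_def by blast
  have "u + v = (r0 + s0) + (r1 + s1) * Zv + (r2 + s2) * Wv" unfolding u v by (simp add: algebra_simps)
  then show ?thesis unfolding P12_def using u v R4_add by blast
qed

lemma P12_smult: "k \<in> R4 \<Longrightarrow> v \<in> P12 \<Longrightarrow> k * v \<in> P12"
proof -
  assume k: "k \<in> R4" and "v \<in> P12"
  then obtain s0 s1 s2 where v: "v = s0 + s1 * Zv + s2 * Wv" "s0 \<in> R4" "s1 \<in> R4" "s2 \<in> R4"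
    unfolding P12_def by blast
  have "k * v = (k * s0) + (k * s1) * Zv + (k * s2) * Wv" unfolding v by (simp add: algebra_simps)
  then show ?thesis unfolding P12_def using v k R4_mult by blast
qed

lemma X_Q3: "Xv \<in> Q3"
proof -
  have "Xv = 0^2 + 1^2 * Xv + 0^2 * Yv" by simp
  then show ?thesis unfolding Q3_def by blast
qed

lemma Y_Q3: "Yv \<in> Q3"
proof -
  have "Yv = 0^2 + 0^2 * Xv + 1^2 * Yv" by simp
  then show ?thesis unfolding Q3_def by blast
qed

lemma ZW_P12: "Zv \<in> P12" "Wv \<in> P12"
proof -
  have "Zv = 0 + 1 * Zv + 0 * Wv" "Wv = 0 + 0 * Zv + 1 * Wv" by simp_all
  then show "Zv \<in> P12" "Wv \<in> P12" unfolding P12_def using R4_0 R4_1 by blast+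
qed

lemma good_R4: assumes "good E" "Xv \<in> E" "Yv \<in> E" "u \<in> R4" shows "u \<in> E"
proof -
  obtain a b c d where u: "u = a^2 + b^2 * Xv + c^2 * Yv + d^2 * (Xv * Yv)"
    using assms(4) unfolding R4_def by blast
  show ?thesis unfolding u
    by (intro good_add[OF assms(1)] good_mult[OF assms(1)] good_sq[OF assms(1)] assms(2,3))
qed

lemma NT_one: assumes "good E" "NT z E" "z = u" "u \<in> E" shows False
proof -
  have "1 \<in> E" by (rule good_1[OF assms(1)])
  moreover have "z * 1 = u" using assms(3) by simp
  ultimately have "(1::'a) = 0" using assms(4) assms(2)[unfolded NT_def, rule_format, of 1 u] by simp
  then show False by simp
qed

lemma N1: assumes "good E" "NT Yv E" "Xv \<in> E" "good E'" "NT Xv E'" shows "Xv * Yv \<notin> Q3"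
proof
  assume "Xv * Yv \<in> Q3"
  then obtain a b c where h: "Xv * Yv = a^2 + b^2 * Xv + c^2 * Yv" unfolding Q3_def by blast
  have "Yv * (Xv + c^2) = Xv * Yv + c^2 * Yv" by (simp add: algebra_simps)
  also have "\<dots> = a^2 + b^2 * Xv + (c^2 * Yv + c^2 * Yv)" unfolding h by (simp add: algebra_simps)
  also have "\<dots> = a^2 + b^2 * Xv" by (simp add: dbl)
  finally have e: "Yv * (Xv + c^2) = a^2 + b^2 * Xv" .
  have "Xv + c^2 \<in> E" "a^2 + b^2 * Xv \<in> E"
    by (intro good_add[OF assms(1)] good_mult[OF assms(1)] good_sq[OF assms(1)] assms(3))+
  then have "Xv + c^2 = 0" using e assms(2) unfolding NT_def by blast
  then have "Xv = - (c^2)" by (simp add: eq_neg_iff_add_eq_0)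
  then have x: "Xv = c^2" by (simp add: ng)
  have c: "c^2 \<in> E'" by (rule good_sq[OF assms(4)])
  show False by (rule NT_one[OF assms(4,5) x c])
qed

lemma N2: assumes "good E" "NT Wv E" "Xv \<in> E" "Yv \<in> E" "Zv \<in> E"
  "good E'" "NT Zv E'" "Xv \<in> E'" "Yv \<in> E'" shows "Zv * Wv \<notin> P12"
proof
  assume "Zv * Wv \<in> P12"
  then obtain r0 r1 r2 where h: "Zv * Wv = r0 + r1 * Zv + r2 * Wv" "r0 \<in> R4" "r1 \<in> R4" "r2 \<in> R4"
    unfolding P12_def by blast
  have "Wv * (Zv + r2) = Zv * Wv + r2 * Wv" by (simp add: algebra_simps)
  also have "\<dots> = r0 + r1 * Zv + (r2 * Wv + r2 * Wv)" unfolding h(1) by (simp add: algebra_simps)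
  also have "\<dots> = r0 + r1 * Zv" by (simp add: dbl)
  finally have e: "Wv * (Zv + r2) = r0 + r1 * Zv" .
  have R: "r0 \<in> E" "r1 \<in> E" "r2 \<in> E" using good_R4[OF assms(1,3,4)] h(2-4) by blast+
  have "Zv + r2 \<in> E" "r0 + r1 * Zv \<in> E"
    by (intro good_add[OF assms(1)] good_mult[OF assms(1)] assms(5) R)+
  then have "Zv + r2 = 0" using e assms(2) unfolding NT_def by blast
  then have "Zv = - r2" by (simp add: eq_neg_iff_add_eq_0)
  then have x: "Zv = r2" by (simp add: ng)
  have c: "r2 \<in> E'" by (rule good_R4[OF assms(6,8,9) h(4)])
  show False by (rule NT_one[OF assms(6,7) x c])
qed

lemma not_sq: assumes "good E" "NT Wv E" shows "Wv^2 \<noteq> (s^2)^2"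
proof
  assume h: "Wv^2 = (s^2)^2"
  have "(Wv + s^2)^2 = Wv^2 + (s^2)^2" by (rule sqa)
  also have "\<dots> = 0" unfolding h by (rule dbl)
  finally have "(Wv + s^2)^2 = 0" .
  then have "Wv + s^2 = 0" unfolding power_eq_0_iff by (rule conjunct1)
  then have "Wv = - (s^2)" by (simp add: eq_neg_iff_add_eq_0)
  then have x: "Wv = s^2" by (simp add: ng)
  have c: "s^2 \<in> E" by (rule good_sq[OF assms(1)])
  show False by (rule NT_one[OF assms x c])
qed

end



lemma adm_Fr:
  fixes Q P :: "'a::{field,countable} set"
  assumes c2: "(2::'a) = 0"
  and Q0: "0 \<in> Q" and Qa: "\<And>a b. a \<in> Q \<Longrightarrow> b \<in> Q \<Longrightarrow> a + b \<in> Q" and Qn: "\<And>a. a \<in> Q \<Longrightarrow> - a \<in> Q"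
  and P0: "0 \<in> P" and Pa: "\<And>a b. a \<in> P \<Longrightarrow> b \<in> P \<Longrightarrow> a + b \<in> P" and Pn: "\<And>a. a \<in> P \<Longrightarrow> - a \<in> P"
  and QP: "Q \<subseteq> P"
  and AP2: "\<And>t x. t \<in> P \<Longrightarrow> x \<in> Q \<Longrightarrow> t^2 * x \<in> Q"
  and AP3: "\<not> (Phi = B \<or> l = 2) \<Longrightarrow> 1 \<in> P \<and> (\<forall>a\<in>P. \<forall>b\<in>P. a * b \<in> P)"
  and AP4: "\<not> (Phi = C \<or> l = 2) \<Longrightarrow> 1 \<in> Q \<and> (\<forall>a\<in>Q. \<forall>b\<in>Q. a * b \<in> Q)"
  and M: "\<And>x y. x \<in> Q \<Longrightarrow> y \<in> P \<Longrightarrow> x * y \<in> P"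
  shows "admissible_pair Phi l (Fr TYPE('a)) (to_nat ` Q) (to_nat ` P)"
  unfolding admissible_pair_def
proof (intro conjI)
  show "additive_subgroup (to_nat ` Q) (Fr TYPE('a))" by (rule Fr_addsub[OF Q0 Qa Qn])
  show "additive_subgroup (to_nat ` P) (Fr TYPE('a))" by (rule Fr_addsub[OF P0 Pa Pn])
  show "pmult_set (Fr TYPE('a)) (to_nat ` P) \<subseteq> to_nat ` Q"
  proof
    fix u assume "u \<in> pmult_set (Fr TYPE('a)) (to_nat ` P)"
    then obtain a :: 'a where "u = to_nat a \<oplus>\<^bsub>Fr TYPE('a)\<^esub> to_nat a" unfolding pmult_set_def by blast
    then have "u = to_nat (a + a)" by (simp only: Fr_simps(3))
    then have "u = to_nat (0::'a)" by (simp only: dbl[OF c2])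
    then show "u \<in> to_nat ` Q" using Q0 by blast
  qed
  show "to_nat ` Q \<subseteq> to_nat ` P" using QP by blast
  show "\<forall>t\<in>to_nat ` P. \<forall>x\<in>to_nat ` Q. (t [^]\<^bsub>Fr TYPE('a)\<^esub> (2::nat)) \<otimes>\<^bsub>Fr TYPE('a)\<^esub> x \<in> to_nat ` Q"
  proof (intro ballI)
    fix t x assume "t \<in> to_nat ` P" "x \<in> to_nat ` Q"
    then obtain a b where ab: "t = to_nat a" "a \<in> P" "x = to_nat b" "b \<in> Q" by blast
    have "(t [^]\<^bsub>Fr TYPE('a)\<^esub> (2::nat)) \<otimes>\<^bsub>Fr TYPE('a)\<^esub> x = to_nat (a^2 * b)"
      unfolding ab(1,3) by (simp only: Fr_pow Fr_simps(2))
    then show "(t [^]\<^bsub>Fr TYPE('a)\<^esub> (2::nat)) \<otimes>\<^bsub>Fr TYPE('a)\<^esub> x \<in> to_nat ` Q"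
      using AP2[OF ab(2,4)] by simp
  qed
  show "\<not> (Phi = B \<or> l = 2) \<longrightarrow> subring (to_nat ` P) (Fr TYPE('a))"
  proof
    assume h: "\<not> (Phi = B \<or> l = 2)"
    show "subring (to_nat ` P) (Fr TYPE('a))"
      using AP3[OF h] by (intro Fr_subring Pa Pn) auto
  qed
  show "\<not> (Phi = C \<or> l = 2) \<longrightarrow> subring (to_nat ` Q) (Fr TYPE('a))"
  proof
    assume h: "\<not> (Phi = C \<or> l = 2)"
    show "subring (to_nat ` Q) (Fr TYPE('a))"
      using AP4[OF h] by (intro Fr_subring Qa Qn) auto
  qed
  show "\<forall>x\<in>to_nat ` Q. \<forall>y\<in>to_nat ` P. x \<otimes>\<^bsub>Fr TYPE('a)\<^esub> y \<in> to_nat ` P"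
  proof (intro ballI)
    fix x y assume "x \<in> to_nat ` Q" "y \<in> to_nat ` P"
    then obtain a b where ab: "x = to_nat a" "a \<in> Q" "y = to_nat b" "b \<in> P" by blast
    show "x \<otimes>\<^bsub>Fr TYPE('a)\<^esub> y \<in> to_nat ` P"
      unfolding ab(1,3) Fr_simps(2) using M[OF ab(2,4)] by blast
  qed
qed

lemma char_two_Fr: "(2::'a::{field,countable}) = 0 \<Longrightarrow> char_two (Fr TYPE('a))"
  unfolding char_two_def by (simp only: Fr_simps(3,4,5) one_add_one)

lemma perfect_Fr:
  fixes K :: "'a::{field,countable} set"
  assumes "perfect_char2 (Fr TYPE('a)) (to_nat ` K)" "w \<in> K"
  shows "\<exists>b\<in>K. w = b^2"
proof -
  have "to_nat w \<in> to_nat ` K" using assms(2) by blast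
  then obtain v where v: "v \<in> to_nat ` K" "to_nat w = v [^]\<^bsub>Fr TYPE('a)\<^esub> (2::nat)"
    using assms(1) unfolding perfect_char2_def by blast
  then obtain b where b: "v = to_nat b" "b \<in> K" by blast
  have "to_nat w = to_nat (b^2)" using v(2) unfolding b(1) by (simp only: Fr_pow)
  then have "w = b^2" by (rule injD[OF inj_to_nat])
  then show ?thesis using b(2) by blast
qed


definition X4 :: t4 where "X4 = cst (cst (cst (var::t1)))"
definition Y4 :: t4 where "Y4 = cst (cst (var::t2))"
definition Z4 :: t4 where "Z4 = cst (var::t3)"
definition W4 :: t4 where "W4 = (var::t4)"

lemma c1: "(2::t1) = 0" by (rule char2_fract[OF char2_poly[OF bit_char2]])
lemma c2: "(2::t2) = 0" by (rule char2_fract[OF char2_poly[OF c1]])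
lemma c3: "(2::t3) = 0" by (rule char2_fract[OF char2_poly[OF c2]])
lemma c4: "(2::t4) = 0" by (rule char2_fract[OF char2_poly[OF c3]])

lemma gE1: "good (Ev :: t1 set)" by (rule good_Ev[OF bit_char2])
lemma gE2: "good (Ev :: t2 set)" by (rule good_Ev[OF c1])
lemma gE3: "good (Ev :: t3 set)" by (rule good_Ev[OF c2])
lemma gE4: "good (Ev :: t4 set)" by (rule good_Ev[OF c3])

lemma gEx1: "good (LiftS (Ev :: t1 set))" by (rule good_LiftS[OF c1 gE1])
lemma gEx2: "good (LiftS (LiftS (Ev :: t1 set)))" by (rule good_LiftS[OF c2 gEx1])
lemma gEx: "good (LiftS (LiftS (LiftS (Ev :: t1 set))))" by (rule good_LiftS[OF c3 gEx2])
lemma NTx: "NT X4 (LiftS (LiftS (LiftS (Ev :: t1 set))))"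
  unfolding X4_def by (rule NT_LiftS[OF gEx2 NT_LiftS[OF gEx1 NT_LiftS[OF gE1 NT_var_Ev]]])

lemma gEy1: "good (LiftS (Ev :: t2 set))" by (rule good_LiftS[OF c2 gE2])
lemma gEy: "good (LiftS (LiftS (Ev :: t2 set)))" by (rule good_LiftS[OF c3 gEy1])
lemma NTy: "NT Y4 (LiftS (LiftS (Ev :: t2 set)))"
  unfolding Y4_def by (rule NT_LiftS[OF gEy1 NT_LiftS[OF gE2 NT_var_Ev]])
lemma Xy: "X4 \<in> LiftS (LiftS (Ev :: t2 set))"
  unfolding X4_def by (rule cst_LiftS[OF gEy1 cst_LiftS[OF gE2 cst_Ev]])

lemma gEz: "good (LiftS (Ev :: t3 set))" by (rule good_LiftS[OF c3 gE3])
lemma NTz: "NT Z4 (LiftS (Ev :: t3 set))"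
  unfolding Z4_def by (rule NT_LiftS[OF gE3 NT_var_Ev])
lemma XYz: "X4 \<in> LiftS (Ev :: t3 set)" "Y4 \<in> LiftS (Ev :: t3 set)"
  unfolding X4_def Y4_def by (rule cst_LiftS[OF gE3 cst_Ev])+

lemma NTw: "NT W4 (Ev :: t4 set)" unfolding W4_def by (rule NT_var_Ev)
lemma XYZw: "X4 \<in> (Ev :: t4 set)" "Y4 \<in> (Ev :: t4 set)" "Z4 \<in> (Ev :: t4 set)"
  unfolding X4_def Y4_def Z4_def by (rule cst_Ev)+

lemma notQ3: "X4 * Y4 \<notin> Q3 X4 Y4"
  by (rule N1[OF c4 gEy NTy Xy gEx NTx])

lemma notP12: "Z4 * W4 \<notin> P12 X4 Y4 Z4 W4"
  by (rule N2[OF c4 gE4 NTw XYZw gEz NTz XYz])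

lemma sp0: "spans 1 (\<lambda>_. 1::bit)"
  unfolding spans_def
proof
  fix t :: bit
  have d: "t = 0 \<or> t = 1" by (metis bit_not_zero_iff)
  have e: "{..<1::nat} = {0}" by (simp add: lessThan_def)
  have t2: "t^2 = t" using d by (elim disjE) simp_all
  show "\<exists>c. t = (\<Sum>i::nat<1. (c i)^2 * 1)"
    by (rule exI[of _ "\<lambda>_. t"]) (simp add: e t2)
qed

lemma sp4: "\<exists>n (ms :: nat \<Rightarrow> t4). spans n ms"
  using spans_fract[OF c3 spans_fract[OF c2 spans_fract[OF c1 spans_fract[OF bit_char2 sp0]]]] by blast



lemma common:
  "field (Fr TYPE(t4)) \<and> char_two (Fr TYPE(t4)) \<and> subfield (to_nat ` (K0::t4 set)) (Fr TYPE(t4)) \<and>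
     ring.finite_dimension (Fr TYPE(t4)) (to_nat ` (K0::t4 set)) (carrier (Fr TYPE(t4))) \<and>
     \<not> perfect_char2 (Fr TYPE(t4)) (to_nat ` (K0::t4 set))"
proof (intro conjI)
  show "field (Fr TYPE(t4))" by (rule field_Fr)
  show "char_two (Fr TYPE(t4))" by (rule char_two_Fr[OF c4])
  show sf: "subfield (to_nat ` (K0::t4 set)) (Fr TYPE(t4))"
    by (rule Fr_subfield) (auto intro: K0_1[OF c4] K0_add[OF c4] K0_neg[OF c4] K0_mult[OF c4] K0_inv[OF c4])
  obtain n and ms :: "nat \<Rightarrow> t4" where sp: "spans n ms" using sp4 by blast
  have sp': "\<exists>c. t = (\<Sum>i<n. c i * ms i) \<and> (\<forall>i. c i \<in> K0)" for t
  proof -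
    obtain c where "t = (\<Sum>i<n. (c i)^2 * ms i)" using sp unfolding spans_def by blast
    moreover have "\<forall>i. (c i)^2 \<in> (K0::t4 set)" using K0_sq[OF c4] by blast
    ultimately show ?thesis by (intro exI[of _ "\<lambda>i. (c i)^2"]) simp
  qed
  show "ring.finite_dimension (Fr TYPE(t4)) (to_nat ` (K0::t4 set)) (carrier (Fr TYPE(t4)))"
    by (rule Fr_findim[OF sf sp'])
  show "\<not> perfect_char2 (Fr TYPE(t4)) (to_nat ` (K0::t4 set))"
  proof
    assume "perfect_char2 (Fr TYPE(t4)) (to_nat ` (K0::t4 set))"
    then obtain b where b: "b \<in> K0" "W4^2 = b^2" using perfect_Fr K0_sq[OF c4, of W4] by blast
    then obtain s :: t4 where "b = s^2" unfolding K0_def[OF c4] by blast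
    then have "W4^2 = (s^2)^2" using b(2) by simp
    then show False using not_sq[OF c4 gE4 NTw] by blast
  qed
qed

lemma Q3_props:
  "0 \<in> Q3 X4 Y4" "\<And>a b. a \<in> Q3 X4 Y4 \<Longrightarrow> b \<in> Q3 X4 Y4 \<Longrightarrow> a + b \<in> Q3 X4 Y4"
  "\<And>a. a \<in> Q3 X4 Y4 \<Longrightarrow> - a \<in> Q3 X4 Y4"
  "\<And>t x. x \<in> Q3 X4 Y4 \<Longrightarrow> t^2 * x \<in> Q3 X4 Y4"
  "K0 \<subseteq> Q3 X4 Y4"
proof -
  show K: "K0 \<subseteq> Q3 X4 Y4" by (rule K0_Q3[OF c4])
  show "0 \<in> Q3 X4 Y4" using K K0_0[OF c4] by blast
  show "\<And>a b. a \<in> Q3 X4 Y4 \<Longrightarrow> b \<in> Q3 X4 Y4 \<Longrightarrow> a + b \<in> Q3 X4 Y4" by (rule Q3_add[OF c4])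
  show "\<And>a. a \<in> Q3 X4 Y4 \<Longrightarrow> - a \<in> Q3 X4 Y4" by (simp only: ng[OF c4])
  show "\<And>t x. x \<in> Q3 X4 Y4 \<Longrightarrow> t^2 * x \<in> Q3 X4 Y4" by (rule Q3_smult[OF c4 K0_sq[OF c4]])
qed

lemma P12_props:
  "0 \<in> P12 X4 Y4 Z4 W4" "\<And>a b. a \<in> P12 X4 Y4 Z4 W4 \<Longrightarrow> b \<in> P12 X4 Y4 Z4 W4 \<Longrightarrow> a + b \<in> P12 X4 Y4 Z4 W4"
  "\<And>a. a \<in> P12 X4 Y4 Z4 W4 \<Longrightarrow> - a \<in> P12 X4 Y4 Z4 W4"
  "\<And>x y. x \<in> R4 X4 Y4 \<Longrightarrow> y \<in> P12 X4 Y4 Z4 W4 \<Longrightarrow> x * y \<in> P12 X4 Y4 Z4 W4"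
  "R4 X4 Y4 \<subseteq> P12 X4 Y4 Z4 W4"
proof -
  show R: "R4 X4 Y4 \<subseteq> P12 X4 Y4 Z4 W4" by (rule R4_P12[OF c4])
  show "0 \<in> P12 X4 Y4 Z4 W4" using R R4_0[OF c4] by blast
  show "\<And>a b. a \<in> P12 X4 Y4 Z4 W4 \<Longrightarrow> b \<in> P12 X4 Y4 Z4 W4 \<Longrightarrow> a + b \<in> P12 X4 Y4 Z4 W4" by (rule P12_add[OF c4])
  show "\<And>a. a \<in> P12 X4 Y4 Z4 W4 \<Longrightarrow> - a \<in> P12 X4 Y4 Z4 W4" by (simp only: ng[OF c4])
  show "\<And>x y. x \<in> R4 X4 Y4 \<Longrightarrow> y \<in> P12 X4 Y4 Z4 W4 \<Longrightarrow> x * y \<in> P12 X4 Y4 Z4 W4" by (rule P12_smult[OF c4])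
qed

lemma notsub:
  "\<not> subfield (to_nat ` Q3 X4 Y4) (Fr TYPE(t4))"
  "\<not> subfield (to_nat ` P12 X4 Y4 Z4 W4) (Fr TYPE(t4))"
  by (rule Fr_not_subfield[OF X_Q3[OF c4] Y_Q3[OF c4] notQ3])
     (rule Fr_not_subfield[OF ZW_P12[OF c4] notP12])


theorem proposition7p1:
  fixes Phi :: root_type and l :: nat
  assumes "l \<ge> 2"
  shows "\<exists>(F :: nat ring) K Q P.
     field F \<and> char_two F \<and> subfield K F \<and>
     ring.finite_dimension F K (carrier F) \<and> \<not> perfect_char2 F K \<and>
     admissible_pair Phi l F Q P \<and>
     K \<subseteq> Q \<and> Q \<subseteq> P \<and> P \<subseteq> carrier F \<and>
     (Phi = B \<and> l \<ge> 3 \<longrightarrow> \<not> subfield P F) \<and>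
     (Phi = C \<and> l \<ge> 3 \<longrightarrow> \<not> subfield Q F) \<and>
     (l = 2 \<longrightarrow> \<not> subfield P F \<and> \<not> subfield Q F)"
proof -
  note cm = common
  have Q3R4: "Q3 X4 Y4 \<subseteq> R4 X4 Y4" by (rule Q3_R4[OF c4])
  have K0R4: "(K0::t4 set) \<subseteq> R4 X4 Y4" using Q3_props(5) Q3R4 by blast
  have Q3P12: "Q3 X4 Y4 \<subseteq> P12 X4 Y4 Z4 W4" using Q3R4 P12_props(5) by blast
  have K0P12: "(K0::t4 set) \<subseteq> P12 X4 Y4 Z4 W4" using K0R4 P12_props(5) by blast
  show ?thesis
  proof (cases "l = 2")
    case True
    have adm: "admissible_pair Phi l (Fr TYPE(t4)) (to_nat ` Q3 X4 Y4) (to_nat ` P12 X4 Y4 Z4 W4)"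
    proof (rule adm_Fr[OF c4 Q3_props(1,2,3) P12_props(1,2,3) Q3P12])
      show "\<And>t x. t \<in> P12 X4 Y4 Z4 W4 \<Longrightarrow> x \<in> Q3 X4 Y4 \<Longrightarrow> t^2 * x \<in> Q3 X4 Y4" by (rule Q3_props(4))
      show "\<not> (Phi = B \<or> l = 2) \<Longrightarrow> 1 \<in> P12 X4 Y4 Z4 W4 \<and> (\<forall>a\<in>P12 X4 Y4 Z4 W4. \<forall>b\<in>P12 X4 Y4 Z4 W4. a * b \<in> P12 X4 Y4 Z4 W4)"
        using True by simp
      show "\<not> (Phi = C \<or> l = 2) \<Longrightarrow> 1 \<in> Q3 X4 Y4 \<and> (\<forall>a\<in>Q3 X4 Y4. \<forall>b\<in>Q3 X4 Y4. a * b \<in> Q3 X4 Y4)"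
        using True by simp
      show "\<And>x y. x \<in> Q3 X4 Y4 \<Longrightarrow> y \<in> P12 X4 Y4 Z4 W4 \<Longrightarrow> x * y \<in> P12 X4 Y4 Z4 W4"
        using P12_props(4) Q3R4 by blast
    qed
    show ?thesis
      apply (rule exI[of _ "Fr TYPE(t4)"], rule exI[of _ "to_nat ` (K0::t4 set)"],
             rule exI[of _ "to_nat ` Q3 X4 Y4"], rule exI[of _ "to_nat ` P12 X4 Y4 Z4 W4"])
      using cm adm Q3_props(5) Q3P12 Fr_img_carrier notsub True by (simp add: image_mono)
  next
    case False
    then have l3: "l \<ge> 3" using assms by simp
    show ?thesis
    proof (cases Phi)
      case B
      have adm: "admissible_pair Phi l (Fr TYPE(t4)) (to_nat ` (K0::t4 set)) (to_nat ` P12 X4 Y4 Z4 W4)"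
      proof (rule adm_Fr[OF c4 K0_0[OF c4] K0_add[OF c4] K0_neg[OF c4] P12_props(1,2,3) K0P12])
        show "\<And>t x. t \<in> P12 X4 Y4 Z4 W4 \<Longrightarrow> x \<in> K0 \<Longrightarrow> t^2 * x \<in> (K0::t4 set)"
          using K0_mult[OF c4] K0_sq[OF c4] by blast
        show "\<not> (Phi = B \<or> l = 2) \<Longrightarrow> 1 \<in> P12 X4 Y4 Z4 W4 \<and> (\<forall>a\<in>P12 X4 Y4 Z4 W4. \<forall>b\<in>P12 X4 Y4 Z4 W4. a * b \<in> P12 X4 Y4 Z4 W4)"
          using B by simp
        show "\<not> (Phi = C \<or> l = 2) \<Longrightarrow> 1 \<in> (K0::t4 set) \<and> (\<forall>a\<in>K0. \<forall>b\<in>K0. a * b \<in> (K0::t4 set))"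
          using K0_1[OF c4] K0_mult[OF c4] by blast
        show "\<And>x y. x \<in> K0 \<Longrightarrow> y \<in> P12 X4 Y4 Z4 W4 \<Longrightarrow> x * y \<in> P12 X4 Y4 Z4 W4"
          using P12_props(4) K0R4 by blast
      qed
      show ?thesis
        apply (rule exI[of _ "Fr TYPE(t4)"], rule exI[of _ "to_nat ` (K0::t4 set)"],
               rule exI[of _ "to_nat ` (K0::t4 set)"], rule exI[of _ "to_nat ` P12 X4 Y4 Z4 W4"])
        using cm adm K0P12 Fr_img_carrier notsub False B by (simp add: image_mono)
    next
      case C
      have adm: "admissible_pair Phi l (Fr TYPE(t4)) (to_nat ` Q3 X4 Y4) (to_nat ` (UNIV::t4 set))"
      proof (rule adm_Fr[OF c4 Q3_props(1,2,3)])
        show "\<And>t x. t \<in> UNIV \<Longrightarrow> x \<in> Q3 X4 Y4 \<Longrightarrow> t^2 * x \<in> Q3 X4 Y4" by (rule Q3_props(4))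
        show "\<not> (Phi = C \<or> l = 2) \<Longrightarrow> 1 \<in> Q3 X4 Y4 \<and> (\<forall>a\<in>Q3 X4 Y4. \<forall>b\<in>Q3 X4 Y4. a * b \<in> Q3 X4 Y4)"
          using C by simp
      qed auto
      show ?thesis
        apply (rule exI[of _ "Fr TYPE(t4)"], rule exI[of _ "to_nat ` (K0::t4 set)"],
               rule exI[of _ "to_nat ` Q3 X4 Y4"], rule exI[of _ "to_nat ` (UNIV::t4 set)"])
        using cm adm Q3_props(5) Fr_img_carrier notsub False C by (simp add: image_mono)
    qed
  qed
qed


end
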